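(* Let $a_1,\dots,a_8$ be pairwise distinct positive reals and $\mathscr H_{\mathrm{small}}=\{P^{(0)}_1(a_i): i=1,\dots,4\}\cup\{P^{(1)}_2(a_i,0): i=5,\dots,8\}$. If the simple one-layer GNN satisfies $h^{(1)}_u(G)=x_u(\Gamma(G))$ for every $G\in\mathscr H_{\mathrm{small}}$ and every $u\in V(G)$, then for every $G\in\mathscr G$ and every $v\in V(G)$, $$h^{(1)}_v(G)=\min\{x_u+x_{(u,v)}:u\in\mathcal N(v)\}=x_v(\Gamma(G)).$$
   Context: Attributed graphs: $G=(V,E,X_{\mathrm v},X_{\mathrm e})$ with $V$ finite, $E$ a set of undirected edges, nonnegative edge weights $x_{(u,v)}=x_{(v,u)}\ge 0$ and nonnegative real node features $x_v$. Every node carries a self-loop of weight $x_{(v,v)}=0$, and $\mathcal N(v)=\{v\}\cup\{u:\{u,v\}\in E\}$. A constant $\beta>0$ is fixed; $\mathscr G$ is the set of attributed graphs with $\sum_{e\in E}x_e<\beta$. $x_v(H)$ denotes the feature of node $v$ in graph $H$. The Bellman–Ford operator $\Gamma$ sends $G$ to the graph with the same vertices, edges and edge weights and node features $x'_v=\min\{x_u+x_{(u,v)}:u\in\mathcal N(v)\}$. For a source $s$, $\mathrm d^{(t)}(s,v)$ is the minimal total weight of a walk from $s$ to $v$ with at most $t$ edges, or $\beta$ if none exists. $P^{(t)}_k(a_1,\dots,a_k)$ is the path graph with vertices $v_0,\dots,v_k$, edges $\{v_{i-1},v_i\}$ of weight $a_i$, and node features $x_{v_i}=\mathrm d^{(t)}(v_0,v_i)$.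 Simple one-layer GNN with parameters $w_2,W_{11},W_{12},b_1,b_2\in\mathbb R$ and $\sigma(z)=\max(z,0)$: $$h^{(1)}_v(G)=\sigma\Big(w_2\min_{u\in\mathcal N(v)}\sigma\big(W_{11}x_u+W_{12}x_{(u,v)}+b_1\big)+b_2\Big).$$
   Formalization: The graphs of $\mathscr H_{\mathrm{small}}$ are also assumed to lie in $\mathscr G$, that is $a_i<\beta$ for every i, in addition to being pairwise distinct and positive. The paper assumes this as well. *)

theory Defs
  imports Main "HOL.Real"
begin

text \<open>Attributed graphs. An undirected edge is a two-element vertex set; edge
weights are a function on such sets (hence symmetric automatically).
Self-loops are implicit and carry weight 0.\<close>

record 'v agraph =
  verts :: "'v set"
  edges :: "'v set set"
  ew    :: "'v set \<Rightarrow> real"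
  nf    :: "'v \<Rightarrow> real"

definition wf_graph :: "'v agraph \<Rightarrow> bool" where
  "wf_graph G \<longleftrightarrow> finite (verts G) \<and>
     (\<forall>e\<in>edges G. e \<subseteq> verts G \<and> card e = 2)"

definition wt :: "'v agraph \<Rightarrow> 'v \<Rightarrow> 'v \<Rightarrow> real" where
  "wt G u v = (if u = v then 0 else ew G {u, v})"

definition nbhd :: "'v agraph \<Rightarrow> 'v \<Rightarrow> 'v set" where
  "nbhd G v = {v} \<union> {u. {u, v} \<in> edges G}"

definition graphs_below :: "real \<Rightarrow> 'v agraph set" where
  "graphs_below \<beta> = {G. wf_graph G \<and>
      (\<forall>e\<in>edges G. 0 \<le> ew G e) \<and> (\<forall>v\<in>verts G. 0 \<le> nf G v) \<and>
      (\<Sum>e\<in>edges G. ew G e) < \<beta>}"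

definition bf :: "'v agraph \<Rightarrow> 'v agraph" where
  "bf G = G\<lparr>nf := (\<lambda>v. Min ((\<lambda>u. nf G u + wt G u v) ` nbhd G v))\<rparr>"

definition relu :: "real \<Rightarrow> real" where
  "relu z = max z 0"

definition gnn :: "real \<Rightarrow> real \<Rightarrow> real \<Rightarrow> real \<Rightarrow> real \<Rightarrow> 'v agraph \<Rightarrow> 'v \<Rightarrow> real" where
  "gnn w2 W11 W12 b1 b2 G v =
     relu (w2 * Min ((\<lambda>u. relu (W11 * nf G u + W12 * wt G u v + b1)) ` nbhd G v) + b2)"

definition is_walk :: "'v agraph \<Rightarrow> 'v list \<Rightarrow> bool" where
  "is_walk G xs \<longleftrightarrow> xs \<noteq> [] \<and> set xs \<subseteq> verts G \<and>
     (\<forall>i. Suc i < length xs \<longrightarrow> {xs ! i, xs ! Suc i} \<in> edges G)"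

definition walk_weight :: "'v agraph \<Rightarrow> 'v list \<Rightarrow> real" where
  "walk_weight G xs = (\<Sum>i<length xs - 1. ew G {xs ! i, xs ! Suc i})"

definition dist_t :: "real \<Rightarrow> nat \<Rightarrow> 'v agraph \<Rightarrow> 'v \<Rightarrow> 'v \<Rightarrow> real" where
  "dist_t \<beta> t G s v =
     (let W = {walk_weight G xs | xs. is_walk G xs \<and> hd xs = s \<and> last xs = v
                                     \<and> length xs \<le> Suc t}
      in if W = {} then \<beta> else Min W)"

text \<open>Path graph on vertices 0..k with edge {i-1,i} of weight as!(i-1), no features yet.\<close>
definition path_base :: "real list \<Rightarrow> nat agraph" where
  "path_base as = \<lparr>verts = {0..length as},
      edges = {{i - 1, i} | i. 1 \<le> i \<and> i \<le> length as},
      ew = (\<lambda>e. if e \<in> {{i - 1, i} | i. 1 \<le> i \<and> i \<le> length as} then as ! Min e else 0),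
      nf = (\<lambda>_. 0)\<rparr>"

definition path_graph :: "real \<Rightarrow> nat \<Rightarrow> real list \<Rightarrow> nat agraph" where
  "path_graph \<beta> t as = (path_base as)\<lparr>nf := (\<lambda>v. dist_t \<beta> t (path_base as) 0 v)\<rparr>"

end

theory Submission imports Defs begin
lemma pb1_edges: "edges (path_base [a]) = {{0,1}}"
  unfolding path_base_def by (auto intro: exI[of _ 1])
lemma pb2_edges: "edges (path_base [a,b]) = {{0,1},{1,2}}"
proof -
  have "{{i - 1, i} |i. 1 \<le> i \<and> i \<le> length [a,b]} = {{0,1},{1,2::nat}}"
  proof (rule set_eqI, rule iffI)
    fix e :: "nat set" assume "e \<in> {{i - 1, i} |i. 1 \<le> i \<and> i \<le> length [a,b]}"
    then obtain i where "e = {i-1,i}" "1 \<le> i" "i \<le> 2" by auto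
    then have "i = 1 \<or> i = 2" by auto
    then show "e \<in> {{0,1},{1,2}}" using \<open>e = _\<close> by auto
  next
    fix e :: "nat set" assume "e \<in> {{0,1},{1,2}}"
    moreover have "{0,1::nat} \<in> {{i - 1, i} |i. 1 \<le> i \<and> i \<le> length [a,b]}" by (auto intro: exI[of _ 1])
    moreover have "{1,2::nat} \<in> {{i - 1, i} |i. 1 \<le> i \<and> i \<le> length [a,b]}" by (auto intro: exI[of _ 2])
    ultimately show "e \<in> {{i - 1, i} |i. 1 \<le> i \<and> i \<le> length [a,b]}" by blast
  qed
  then show ?thesis unfolding path_base_def by simp
qed
lemma pg_edges[simp]: "edges (path_graph \<beta> t as) = edges (path_base as)"
  by (simp add: path_graph_def)
lemma pg_ew[simp]: "ew (path_graph \<beta> t as) = ew (path_base as)"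
  by (simp add: path_graph_def)
lemma pg_verts[simp]: "verts (path_graph \<beta> t as) = {0..length as}"
  by (simp add: path_graph_def path_base_def)
lemma pg_nf: "nf (path_graph \<beta> t as) v = dist_t \<beta> t (path_base as) 0 v"
  by (simp add: path_graph_def)
lemma pb1_ew: "ew (path_base [a]) {0,1} = a"
proof -
  have "{0,1::nat} \<in> {{i - 1, i} |i. 1 \<le> i \<and> i \<le> length [a]}" by (auto intro: exI[of _ 1])
  moreover have "Min {0,1::nat} = 0" by simp
  ultimately show ?thesis unfolding path_base_def by simp
qed
lemma pb2_ew1: "ew (path_base [a,b]) {0,1} = a"
proof -
  have "{0,1::nat} \<in> {{i - 1, i} |i. 1 \<le> i \<and> i \<le> length [a,b]}" by (auto intro: exI[of _ 1])
  moreover have "Min {0,1::nat} = 0" by simp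
  ultimately show ?thesis unfolding path_base_def by simp
qed
lemma pb2_ew2: "ew (path_base [a,b]) {1,2} = b"
proof -
  have "{1,2::nat} \<in> {{i - 1, i} |i. 1 \<le> i \<and> i \<le> length [a,b]}" by (auto intro: exI[of _ 2])
  moreover have "Min {1,2::nat} = 1" by simp
  ultimately show ?thesis unfolding path_base_def by simp
qed
lemma nb1: "nbhd (path_graph \<beta> t [a]) 0 = {0,1}" "nbhd (path_graph \<beta> t [a]) 1 = {1,0}"
  unfolding nbhd_def by (auto simp: pb1_edges doubleton_eq_iff)
lemma nb2: "nbhd (path_graph \<beta> t [a,b]) 2 = {2,1}"
  unfolding nbhd_def by (auto simp: pb2_edges doubleton_eq_iff)
lemma wt1: "wt (path_graph \<beta> t [a]) 1 0 = a" "wt (path_graph \<beta> t [a]) 0 1 = a"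
  unfolding wt_def using pb1_ew[of a] by (simp_all add: insert_commute)
lemma wt2: "wt (path_graph \<beta> t [a,b]) 1 2 = b"
  unfolding wt_def using pb2_ew2[of a b] by simp

lemma len1: "xs \<noteq> [] \<Longrightarrow> length xs \<le> Suc 0 \<Longrightarrow> xs = [hd xs]" by (cases xs) auto
lemma len2: "xs \<noteq> [] \<Longrightarrow> length xs \<le> Suc (Suc 0) \<Longrightarrow> xs = [hd xs] \<or> xs = [hd xs, last xs]"
  by (cases xs; cases "tl xs") auto

lemma d0: "v \<in> {0,1} \<Longrightarrow> dist_t \<beta> 0 (path_base [a]) 0 v = (if v = 0 then 0 else \<beta>)"
proof -
  assume v: "v \<in> {0,1}"
  let ?G = "path_base [a]"
  have "{walk_weight ?G xs | xs. is_walk ?G xs \<and> hd xs = 0 \<and> last xs = v \<and> length xs \<le> Suc 0}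
     = (if v = 0 then {0} else {})"
  proof (rule set_eqI, rule iffI)
    fix w :: real assume "w \<in> {walk_weight ?G xs | xs. is_walk ?G xs \<and> hd xs = 0 \<and> last xs = v \<and> length xs \<le> Suc 0}"
    then obtain xs where xs: "w = walk_weight ?G xs" "is_walk ?G xs" "hd xs = 0" "last xs = v" "length xs \<le> Suc 0" by blast
    then have "xs = [hd xs]" using len1 is_walk_def by blast
    then have "xs = [0]" using xs by simp
    then show "w \<in> (if v = 0 then {0} else {})" using xs by (simp add: walk_weight_def)
  next
    fix w :: real assume "w \<in> (if v = 0 then {0} else {})"
    then have "v = 0" "w = 0" by (auto split: if_splits)
    moreover have "is_walk ?G [0]" by (simp add: is_walk_def path_base_def)
    ultimately show "w \<in> {walk_weight ?G xs | xs. is_walk ?G xs \<and> hd xs = 0 \<and> last xs = v \<and> length xs \<le> Suc 0}"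
      by (auto simp: walk_weight_def intro!: exI[of _ "[0]"])
  qed
  then show ?thesis unfolding dist_t_def by (simp add: Let_def)
qed

lemma d1: "v \<in> {1,2} \<Longrightarrow> dist_t \<beta> 1 (path_base [a,b]) 0 v = (if v = 1 then a else \<beta>)"
proof -
  assume v: "v \<in> {1,2}"
  let ?G = "path_base [a,b]"
  let ?W = "{walk_weight ?G xs | xs. is_walk ?G xs \<and> hd xs = 0 \<and> last xs = v \<and> length xs \<le> Suc 1}"
  have "?W = (if v = 1 then {a} else {})"
  proof (rule set_eqI, rule iffI)
    fix w :: real assume "w \<in> ?W"
    then obtain xs where xs: "w = walk_weight ?G xs" "is_walk ?G xs" "hd xs = 0" "last xs = v" "length xs \<le> Suc 1" by blast
    have "xs \<noteq> []" using xs(2) is_walk_def by blast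
    then have "xs = [hd xs] \<or> xs = [hd xs, last xs]" using len2 xs(5) by simp
    moreover have "xs \<noteq> [0]" using xs v by auto
    ultimately have "xs = [0, v]" using xs by auto
    moreover have "\<forall>i. Suc i < length xs \<longrightarrow> {xs ! i, xs ! Suc i} \<in> edges ?G" using xs(2) unfolding is_walk_def by blast
    ultimately have "{0, v} \<in> edges ?G" by (metis One_nat_def length_Cons list.size(3) nth_Cons_0 nth_Cons_Suc lessI)
    then have "v = 1" using v by (auto simp: pb2_edges doubleton_eq_iff)
    then show "w \<in> (if v = 1 then {a} else {})" using xs \<open>xs = [0,v]\<close> pb2_ew1[of a b] by (simp add: walk_weight_def)
  next
    fix w :: real assume "w \<in> (if v = 1 then {a} else {})"
    then have "v = 1" "w = a" by (auto split: if_splits)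
    moreover have "is_walk ?G [0,1]"
      unfolding is_walk_def by (auto simp: pb2_edges less_Suc_eq) (auto simp: path_base_def)
    moreover have "walk_weight ?G [0,1] = a" using pb2_ew1[of a b] by (simp add: walk_weight_def)
    ultimately show "w \<in> ?W" by (auto intro!: exI[of _ "[0,1]"])
  qed
  then show ?thesis unfolding dist_t_def by (simp add: Let_def)
qed

lemma pb_ew_Suc: "ew (path_base [a]) {0, Suc 0} = a" "ew (path_base [a,b]) {0, Suc 0} = a"
  "ew (path_base [a,b]) {Suc 0, 2} = b"
  using pb1_ew[of a] pb2_ew1[of a b] pb2_ew2[of a b] by simp_all

lemma bf_nf: "nf (bf G) v = Min ((\<lambda>u. nf G u + wt G u v) ` nbhd G v)"
  by (simp add: bf_def)

lemma relu_pos_eq: "relu z = x \<Longrightarrow> 0 < x \<Longrightarrow> z = x" by (simp add: relu_def max_def split: if_splits)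

lemma T1:
  assumes "path_graph \<beta> 0 [a] \<in> graphs_below \<beta>" "0 < a" "0 < \<beta>"
    and "\<forall>u\<in>verts (path_graph \<beta> 0 [a]).
        gnn w2 W11 W12 b1 b2 (path_graph \<beta> 0 [a]) u = nf (bf (path_graph \<beta> 0 [a])) u"
  shows "w2 * min (relu (W11*\<beta>+b1)) (relu (W12*a+b1)) + b2 = a"
    and "relu (w2 * min (relu b1) (relu (W11*\<beta> + W12*a + b1)) + b2) = 0"
    and "a < \<beta>"
proof -
  let ?P = "path_graph \<beta> 0 [a]"
  show "a < \<beta>" using assms(1) by (simp add: graphs_below_def pb1_edges pb_ew_Suc)
  have n0: "nf ?P 0 = 0" and n1: "nf ?P 1 = \<beta>" by (simp_all add: pg_nf d0)
  have w00: "wt ?P 0 0 = 0" and w11: "wt ?P 1 1 = 0" by (simp_all add: wt_def)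
  have g1: "gnn w2 W11 W12 b1 b2 ?P 1 = nf (bf ?P) 1" using assms(4) by simp
  have g0: "gnn w2 W11 W12 b1 b2 ?P 0 = nf (bf ?P) 0" using assms(4) by simp
  have "nf (bf ?P) 1 = a" unfolding bf_nf nb1 using n0 n1 w11 wt1 \<open>a < \<beta>\<close> by simp
  moreover have "gnn w2 W11 W12 b1 b2 ?P 1 = relu (w2 * min (relu (W11*\<beta>+b1)) (relu (W12*a+b1)) + b2)"
    unfolding gnn_def nb1 using n0 n1 w11 wt1 by simp
  ultimately show "w2 * min (relu (W11*\<beta>+b1)) (relu (W12*a+b1)) + b2 = a"
    using g1 relu_pos_eq assms(2) by metis
  have "nf (bf ?P) 0 = 0" unfolding bf_nf nb1 using n0 n1 w00 wt1 assms by simp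
  moreover have "gnn w2 W11 W12 b1 b2 ?P 0 = relu (w2 * min (relu b1) (relu (W11*\<beta> + W12*a + b1)) + b2)"
    unfolding gnn_def nb1 using n0 n1 w00 wt1 by simp
  ultimately show "relu (w2 * min (relu b1) (relu (W11*\<beta> + W12*a + b1)) + b2) = 0"
    using g0 by simp
qed

lemma T2:
  assumes "path_graph \<beta> 1 [a, 0] \<in> graphs_below \<beta>" "0 < a" "0 < \<beta>"
    and "\<forall>u\<in>verts (path_graph \<beta> 1 [a, 0]).
        gnn w2 W11 W12 b1 b2 (path_graph \<beta> 1 [a, 0]) u = nf (bf (path_graph \<beta> 1 [a, 0])) u"
  shows "w2 * min (relu (W11*\<beta>+b1)) (relu (W11*a+b1)) + b2 = a"
proof -
  let ?P = "path_graph \<beta> 1 [a, 0]"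
  have "{0,1::nat} \<noteq> {1,2}" by (auto simp: doubleton_eq_iff)
  then have "a < \<beta>" using assms(1) by (simp add: graphs_below_def pb2_edges pb_ew_Suc)
  have n1: "nf ?P 1 = a" and n2: "nf ?P 2 = \<beta>" using d1[of 1 \<beta> a 0] d1[of 2 \<beta> a 0] by (simp_all add: pg_nf)
  have w22: "wt ?P 2 2 = 0" by (simp_all add: wt_def)
  have g2: "gnn w2 W11 W12 b1 b2 ?P 2 = nf (bf ?P) 2" using assms(4) by simp
  have "nf (bf ?P) 2 = a" unfolding bf_nf nb2 using n1 n2 w22 wt2 \<open>a < \<beta>\<close> by simp
  moreover have "gnn w2 W11 W12 b1 b2 ?P 2 = relu (w2 * min (relu (W11*\<beta>+b1)) (relu (W11*a+b1)) + b2)"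
    unfolding gnn_def nb2 using n1 n2 w22 wt2 by (simp add: min.commute)
  ultimately show ?thesis using g2 relu_pos_eq assms(2) by metis
qed


lemma key:
  assumes X: "finite X" "card X \<ge> 4"
    and h: "\<And>x. x \<in> X \<Longrightarrow> w2 * min C (relu (p*x+b1)) + b2 = x"
  shows "w2*p = 1 \<and> w2*b1 + b2 = 0"
proof (rule ccontr)
  assume nc: "\<not> (w2*p = 1 \<and> w2*b1 + b2 = 0)"
  let ?R = "{x\<in>X. w2*(p*x+b1)+b2 = x}"
  have R: "\<forall>x\<in>?R. \<forall>y\<in>?R. x = y"
  proof (intro ballI)
    fix x y assume "x\<in>?R" "y\<in>?R"
    then have e: "w2*(p*x+b1)+b2 = x" "w2*(p*y+b1)+b2 = y" by auto
    have "(w2*p-1)*(x-y) = (w2*(p*x+b1)+b2 - x) - (w2*(p*y+b1)+b2 - y)" by (simp add: algebra_simps)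
    also have "\<dots> = 0" using e by simp
    finally have z: "(w2*p-1)*(x-y) = 0" .
    show "x = y"
    proof (cases "w2*p = 1")
      case True
      then have "w2*(p*x+b1)+b2 = x + (w2*b1+b2)" by (simp add: algebra_simps)
      then have "w2*b1+b2 = 0" using e by simp
      then show ?thesis using True nc by simp
    next
      case False
      then show ?thesis using z by simp
    qed
  qed
  have fR: "finite ?R" using X(1) by (rule finite_subset[rotated]) blast
  have cR: "card ?R \<le> Suc 0" unfolding card_le_Suc0_iff_eq[OF fR] using R by blast
  have sub: "X \<subseteq> {w2*C+b2, b2} \<union> ?R"
  proof
    fix x assume x: "x \<in> X"
    define m where "m = min C (relu (p*x+b1))"
    have hx: "w2 * m + b2 = x" using h[OF x] by (simp add: m_def)
    have r: "relu (p*x+b1) = p*x+b1 \<or> relu (p*x+b1) = 0" by (simp add: relu_def max_def)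
    have "m = C \<or> m = relu (p*x+b1)" by (simp add: m_def min_def)
    then have "m = C \<or> m = 0 \<or> m = p*x+b1" using r by metis
    then show "x \<in> {w2*C+b2, b2} \<union> ?R"
    proof (elim disjE)
      assume "m = C" then show ?thesis using hx by simp
    next
      assume "m = 0" then show ?thesis using hx by simp
    next
      assume "m = p*x+b1" then show ?thesis using hx x by simp
    qed
  qed
  have f2: "finite ({w2*C+b2, b2} \<union> ?R)" using fR by blast
  have a1: "card X \<le> card ({w2*C+b2, b2} \<union> ?R)" by (rule card_mono[OF f2 sub])
  have a2: "card ({w2*C+b2, b2} \<union> ?R) \<le> card {w2*C+b2, b2} + card ?R" by (rule card_Un_le)
  have a3: "card {w2*C+b2, b2} \<le> 2" by (cases "w2*C+b2 = b2") auto
  show False using a1 a2 a3 cR X(2) by linarith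
qed

lemma final:
  assumes G: "G \<in> graphs_below \<beta>" and v: "v \<in> verts G" and c: "0 < c" "w2*c = 1"
    and b: "w2*b1+b2 = 0" "0 \<le> b1"
  shows "gnn w2 c c b1 b2 G v = Min ((\<lambda>u. nf G u + wt G u v) ` nbhd G v)"
proof -
  let ?N = "nbhd G v"
  let ?s = "\<lambda>u. nf G u + wt G u v"
  have wf: "wf_graph G" and ewn: "\<forall>e\<in>edges G. 0 \<le> ew G e" and nfn: "\<forall>v\<in>verts G. 0 \<le> nf G v"
    using G by (auto simp: graphs_below_def)
  have Nsub: "?N \<subseteq> verts G" using wf v by (auto simp: nbhd_def wf_graph_def)
  have fin: "finite ?N" using Nsub wf finite_subset by (auto simp: wf_graph_def)
  have ne: "?N \<noteq> {}" by (simp add: nbhd_def)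
  have nn: "\<And>u. u \<in> ?N \<Longrightarrow> 0 \<le> ?s u"
  proof -
    fix u assume u: "u \<in> ?N"
    have "0 \<le> nf G u" using nfn Nsub u by auto
    moreover have "0 \<le> wt G u v" using u ewn by (auto simp: wt_def nbhd_def)
    ultimately show "0 \<le> ?s u" by simp
  qed
  have img: "(\<lambda>u. relu (c * nf G u + c * wt G u v + b1)) ` ?N = (\<lambda>s. c*s+b1) ` (?s ` ?N)"
    unfolding image_image
  proof (rule image_cong[OF refl])
    fix u assume "u \<in> ?N"
    then have "0 \<le> c * ?s u" using nn c by simp
    then show "relu (c * nf G u + c * wt G u v + b1) = c * ?s u + b1"
      using b by (simp add: relu_def algebra_simps)
  qed
  have mono: "mono (\<lambda>s::real. c*s+b1)" using c by (auto simp: mono_def)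
  have M: "Min ((\<lambda>s. c*s+b1) ` (?s ` ?N)) = c * Min (?s ` ?N) + b1"
    using mono_Min_commute[OF mono, of "?s ` ?N"] fin ne by simp
  have M0: "0 \<le> Min (?s ` ?N)" using fin ne nn by simp
  have "w2 * (c * Min (?s ` ?N) + b1) + b2 = (w2*c) * Min (?s ` ?N) + (w2*b1+b2)" by (simp add: algebra_simps)
  also have "\<dots> = Min (?s ` ?N)" using c b by simp
  finally show ?thesis unfolding gnn_def img M using M0 by (simp add: relu_def)
qed

theorem mainTheorem3:
  fixes \<beta> w2 W11 W12 b1 b2 :: real and a :: "nat \<Rightarrow> real"
    and G :: "'v agraph" and v :: 'v
  assumes beta_pos: "\<beta> > 0"
    and distinct: "inj_on a {1..8}"
    and pos: "\<forall>i\<in>{1..8}. 0 < a i"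
    and in_class: "\<forall>i\<in>{1..4}. path_graph \<beta> 0 [a i] \<in> graphs_below \<beta>"
    and in_class2: "\<forall>i\<in>{5..8}. path_graph \<beta> 1 [a i, 0] \<in> graphs_below \<beta>"
    and train1: "\<forall>i\<in>{1..4}. \<forall>u\<in>verts (path_graph \<beta> 0 [a i]).
        gnn w2 W11 W12 b1 b2 (path_graph \<beta> 0 [a i]) u = nf (bf (path_graph \<beta> 0 [a i])) u"
    and train2: "\<forall>i\<in>{5..8}. \<forall>u\<in>verts (path_graph \<beta> 1 [a i, 0]).
        gnn w2 W11 W12 b1 b2 (path_graph \<beta> 1 [a i, 0]) u = nf (bf (path_graph \<beta> 1 [a i, 0])) u"
    and G: "G \<in> graphs_below \<beta>"
    and v: "v \<in> verts G"
  shows "gnn w2 W11 W12 b1 b2 G v = Min ((\<lambda>u. nf G u + wt G u v) ` nbhd G v)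
       \<and> Min ((\<lambda>u. nf G u + wt G u v) ` nbhd G v) = nf (bf G) v"
proof -
  have inj1: "inj_on a {1..4}" and inj2: "inj_on a {5..8}"
    using distinct by (auto intro: inj_on_subset)
  have c1: "card (a ` {1..4}) = 4" using card_image[OF inj1] by simp
  have c2: "card (a ` {5..8}) = 4" using card_image[OF inj2] by simp
  have k1: "w2*W12 = 1 \<and> w2*b1 + b2 = 0"
  proof (rule key[where X="a ` {1..4}" and C="relu (W11*\<beta>+b1)"])
    fix x assume "x \<in> a ` {1..4}"
    then obtain i where i: "i \<in> {1..4}" "x = a i" by auto
    have i8: "i \<in> {1..8}" using i by auto
    show "w2 * min (relu (W11*\<beta>+b1)) (relu (W12*x+b1)) + b2 = x"
      unfolding i(2) by (rule T1(1)[OF bspec[OF in_class i(1)] bspec[OF pos i8] beta_pos bspec[OF train1 i(1)]])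
  qed (use c1 in auto)
  have k2: "w2*W11 = 1 \<and> w2*b1 + b2 = 0"
  proof (rule key[where X="a ` {5..8}" and C="relu (W11*\<beta>+b1)"])
    fix x assume "x \<in> a ` {5..8}"
    then obtain i where i: "i \<in> {5..8}" "x = a i" by auto
    have i8: "i \<in> {1..8}" using i by auto
    show "w2 * min (relu (W11*\<beta>+b1)) (relu (W11*x+b1)) + b2 = x"
      unfolding i(2) by (rule T2[OF bspec[OF in_class2 i(1)] bspec[OF pos i8] beta_pos bspec[OF train2 i(1)]])
  qed (use c2 in auto)
  have w0: "w2 \<noteq> 0" using k1 by auto
  have eqW: "W11 = W12" using k1 k2 w0 by (metis mult_left_cancel)
  have h1: "\<And>i. i \<in> {1..4} \<Longrightarrow> w2 * min (relu (W11*\<beta>+b1)) (relu (W12*a i+b1)) + b2 = a i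
        \<and> relu (w2 * min (relu b1) (relu (W11*\<beta> + W12*a i + b1)) + b2) = 0 \<and> a i < \<beta>"
  proof -
    fix i :: nat assume i: "i \<in> {1..4}"
    have i8: "i \<in> {1..8}" using i by auto
    note A = bspec[OF in_class i] bspec[OF pos i8] beta_pos bspec[OF train1 i]
    show "w2 * min (relu (W11*\<beta>+b1)) (relu (W12*a i+b1)) + b2 = a i
        \<and> relu (w2 * min (relu b1) (relu (W11*\<beta> + W12*a i + b1)) + b2) = 0 \<and> a i < \<beta>"
      using T1[OF A] by blast
  qed
  have wpos: "0 < w2"
  proof (rule ccontr)
    assume "\<not> 0 < w2"
    then have "w2 < 0" using w0 by simp
    have p: "W12 < 0"
    proof (rule ccontr)
      assume "\<not> W12 < 0"
      then have "w2*W12 \<le> 0" using \<open>w2 < 0\<close> by (simp add: mult_nonpos_nonneg)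
      then show False using k1 by simp
    qed
    have "\<And>i. i \<in> {1..4} \<Longrightarrow> a i = w2 * relu (W11*\<beta>+b1) + b2"
    proof -
      fix i :: nat assume i: "i \<in> {1..4}"
      have "W12 * \<beta> \<le> W12 * a i" using h1[OF i] p by (simp add: mult_le_cancel_left)
      then have "relu (W11*\<beta>+b1) \<le> relu (W12*a i+b1)" using eqW by (simp add: relu_def)
      then show "a i = w2 * relu (W11*\<beta>+b1) + b2" using h1[OF i] by (simp add: min_def)
    qed
    then have "a 1 = a 2" by simp
    moreover have "a 1 \<noteq> a 2" using distinct by (auto dest: inj_onD)
    ultimately show False by simp
  qed
  have b1: "0 \<le> b1"
  proof (rule ccontr)
    assume "\<not> 0 \<le> b1"
    then have "relu b1 = 0" by (simp add: relu_def)
    moreover have "0 \<le> relu (W11*\<beta> + W12*a 1 + b1)" by (simp add: relu_def)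
    ultimately have "relu b2 = 0" using h1[of 1] by (simp add: min_def)
    moreover have "w2 * b1 < 0" using wpos \<open>\<not> 0 \<le> b1\<close> by (simp add: mult_pos_neg)
    then have "0 < b2" using k1 by linarith
    ultimately show False by (simp add: relu_def)
  qed
  have Wpos: "0 < W12" using k1 wpos by (metis zero_less_mult_pos zero_less_one)
  have "w2 * W12 = 1" "w2*b1+b2 = 0" using k1 by auto
  then have "gnn w2 W12 W12 b1 b2 G v = Min ((\<lambda>u. nf G u + wt G u v) ` nbhd G v)"
    using final[OF G v Wpos, of w2 b1 b2] b1 by blast
  then show ?thesis using eqW by (simp add: bf_nf)
qed

end
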